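(* Let $n\ge3$ and let $G$ be a spanning subgraph of $CT_n$ containing no cycle of length $6$. Then for every edge $e$ of $CT_n$ there are at most two $4$-cycles $H$ of $CT_n$ with $e\in E(H)$ such that the three edges of $H$ other than $e$ all belong to $G$.
   Context: $CT_n$ is the graph with vertex set the symmetric group $\mathrm{S}_n$ on $\{1,\dots,n\}$ in which $\{x,y\}$ is an edge iff $yx^{-1}$ is a transposition. *)

theory Defs
  imports "HOL-Combinatorics.Combinatorics"
begin

definition CT_verts :: "nat \<Rightarrow> (nat \<Rightarrow> nat) set" where
  "CT_verts n = {p. p permutes {1..n}}"

definition CT_adj :: "nat \<Rightarrow> (nat \<Rightarrow> nat) \<Rightarrow> (nat \<Rightarrow> nat) \<Rightarrow> bool" where
  "CT_adj n x y \<longleftrightarrow> x \<in> CT_verts n \<and> y \<in> CT_verts n \<and>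
     (\<exists>a\<in>{1..n}. \<exists>b\<in>{1..n}. a \<noteq> b \<and> y \<circ> inv x = transpose a b)"

definition CT_edges :: "nat \<Rightarrow> (nat \<Rightarrow> nat) set set" where
  "CT_edges n = {{x, y} | x y. CT_adj n x y}"

definition cycles_of_length :: "'a set set \<Rightarrow> nat \<Rightarrow> 'a set set set" where
  "cycles_of_length E k =
     {(\<lambda>i. {vs ! i, vs ! ((i + 1) mod k)}) ` {..<k} | vs.
        length vs = k \<and> distinct vs \<and> (\<forall>i<k. {vs ! i, vs ! ((i + 1) mod k)} \<in> E)}"

end

theory Submission
  imports Defs
begin



lemma adj_left: assumes "CT_adj n x y"
  obtains a b where "a \<in> {1..n}" "b \<in> {1..n}" "a \<noteq> b" "y = transpose a b \<circ> x"
    "x \<in> CT_verts n" "y \<in> CT_verts n"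
proof -
  from assms obtain a b where ab: "a \<in> {1..n}" "b \<in> {1..n}" "a \<noteq> b" "y \<circ> inv x = transpose a b"
    and v: "x \<in> CT_verts n" "y \<in> CT_verts n" unfolding CT_adj_def by blast
  from v have "inv x \<circ> x = id" unfolding CT_verts_def using permutes_inv_o by blast
  hence "y = transpose a b \<circ> x" using ab(4) by (metis comp_assoc comp_id)
  thus ?thesis using that ab v by blast
qed

lemma adj_sym: assumes "CT_adj n x y" shows "CT_adj n y x"
proof -
  obtain a b where ab: "a \<in> {1..n}" "b \<in> {1..n}" "a \<noteq> b" "y = transpose a b \<circ> x"
    and v: "x \<in> CT_verts n" "y \<in> CT_verts n" using adj_left[OF assms] by metis
  have "x = transpose a b \<circ> y" using ab(4) by (simp add: comp_assoc[symmetric])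
  moreover have "y \<circ> inv y = id" using v unfolding CT_verts_def using permutes_inv_o by blast
  ultimately have "x \<circ> inv y = transpose a b" by (metis comp_assoc comp_id)
  thus ?thesis unfolding CT_adj_def using ab v by blast
qed

lemma adj_even: assumes "CT_adj n x y" shows "evenperm y = (\<not> evenperm x)"
proof -
  obtain a b where ab: "a \<in> {1..n}" "b \<in> {1..n}" "a \<noteq> b" "y = transpose a b \<circ> x"
    and v: "x \<in> CT_verts n" "y \<in> CT_verts n" using adj_left[OF assms] by metis
  have "permutation x" using v unfolding CT_verts_def permutation_permutes by blast
  thus ?thesis using ab by (simp add: evenperm_comp permutation_swap_id evenperm_swap)
qed

lemma no_triangle: "CT_adj n x y \<Longrightarrow> CT_adj n x w \<Longrightarrow> CT_adj n y w \<Longrightarrow> False"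
proof -
  assume a: "CT_adj n x y" "CT_adj n x w" "CT_adj n y w"
  have "evenperm y = (\<not> evenperm x)" "evenperm w = (\<not> evenperm x)" "evenperm w = (\<not> evenperm y)"
    using adj_even[OF a(1)] adj_even[OF a(2)] adj_even[OF a(3)] by auto
  thus False by simp
qed

lemma edge_adj: assumes "{a,b} \<in> CT_edges n" shows "CT_adj n a b"
proof -
  from assms obtain x y where "{a,b} = {x,y}" "CT_adj n x y" unfolding CT_edges_def by blast
  thus ?thesis using adj_sym by (metis doubleton_eq_iff)
qed

lemma key: assumes "a \<noteq> b" "c \<noteq> d" "transpose a b \<circ> \<tau> = transpose c d" "\<tau> \<noteq> id"
  shows "\<exists>z. \<tau> z \<noteq> z \<and> transpose a b = transpose z (\<tau> z)"
proof -
  have "\<tau> = (transpose a b \<circ> transpose a b) \<circ> \<tau>" by simp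
  also have "\<dots> = transpose a b \<circ> (transpose a b \<circ> \<tau>)" by (simp only: comp_assoc)
  also have "\<dots> = transpose a b \<circ> transpose c d" using assms(3) by simp
  finally have t: "\<tau> = transpose a b \<circ> transpose c d" .
  show ?thesis
  proof (cases "a \<noteq> c \<and> a \<noteq> d")
    case True
    hence "\<tau> a = b" using t by simp
    thus ?thesis using assms(1) by metis
  next
    case False
    show ?thesis
    proof (cases "b \<noteq> c \<and> b \<noteq> d")
      case True
      hence "\<tau> b = a" using t assms(1) False by auto
      thus ?thesis using assms(1) transpose_commute by metis
    next
      case False2: False
      have "transpose c d = transpose a b"
      proof (cases "a = c")
        case True
        hence "b = d" using False2 assms(1) by blast
        thus ?thesis using True by simp
      next
        case False3: False
        hence "a = d" "b = c" using False False2 assms(1) by blast+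
        thus ?thesis by (simp add: transpose_commute)
      qed
      thus ?thesis using t assms(4) by simp
    qed
  qed
qed

lemma moved_in: "\<tau> = transpose a b \<circ> transpose c d \<Longrightarrow> \<tau> z \<noteq> z \<Longrightarrow> z \<in> {a,b,c,d}"
proof (rule ccontr)
  assume "\<tau> = transpose a b \<circ> transpose c d" "\<tau> z \<noteq> z" "z \<notin> {a,b,c,d}"
  thus False by simp
qed

lemma decomp: "transpose a b \<circ> \<tau> = transpose c d \<Longrightarrow> \<tau> = transpose a b \<circ> transpose c d"
proof -
  assume h: "transpose a b \<circ> \<tau> = transpose c d"
  have "\<tau> = (transpose a b \<circ> transpose a b) \<circ> \<tau>" by simp
  also have "\<dots> = transpose a b \<circ> (transpose a b \<circ> \<tau>)" by (simp only: comp_assoc)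
  also have "\<dots> = transpose a b \<circ> transpose c d" using h by simp
  finally show ?thesis .
qed

definition ok :: "(nat \<Rightarrow> nat) \<Rightarrow> (nat \<Rightarrow> nat) \<Rightarrow> bool" where
  "ok \<tau> s \<longleftrightarrow> (\<exists>a b c d. a \<noteq> b \<and> c \<noteq> d \<and> s = transpose a b \<and> s \<circ> \<tau> = transpose c d)"

lemma card3: "card {a, c, d::'a} \<le> 3"
  by (simp add: card_insert_if)

lemma ok_in: assumes "ok \<tau> s" "\<tau> = transpose a b \<circ> transpose c d" "\<tau> \<noteq> id"
  shows "s \<in> (\<lambda>z. transpose z (\<tau> z)) ` {a,b,c,d}"
proof -
  obtain a' b' c' d' where h: "a' \<noteq> b'" "c' \<noteq> d'" "s = transpose a' b'" "s \<circ> \<tau> = transpose c' d'"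
    using assms(1) unfolding ok_def by blast
  obtain z where z: "\<tau> z \<noteq> z" "transpose a' b' = transpose z (\<tau> z)"
    using key[OF h(1,2) _ assms(3)] h(3,4) by blast
  have "z \<in> {a,b,c,d}" using moved_in[OF assms(2) z(1)] .
  thus ?thesis using z h(3) by blast
qed

lemma at_most_3:
  assumes "\<tau> \<noteq> id" "ok \<tau> s1" "ok \<tau> s2" "ok \<tau> s3" "ok \<tau> s4"
    "distinct [s1,s2,s3,s4]"
  shows False
proof -
  obtain a b c d where h: "a \<noteq> b" "c \<noteq> d" "s1 = transpose a b" "s1 \<circ> \<tau> = transpose c d"
    using assms(2) unfolding ok_def by blast
  have t: "\<tau> = transpose a b \<circ> transpose c d" using decomp[of a b \<tau> c d] h(3,4) by simp
  define f where "f = (\<lambda>z. transpose z (\<tau> z))"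
  have sub: "{s1,s2,s3,s4} \<subseteq> f ` {a,b,c,d}"
    using ok_in[OF _ t assms(1)] assms(2-5) unfolding f_def by blast
  have c4: "card {s1,s2,s3,s4} = 4" using assms(6) by simp
  have le: "card (f ` {a,b,c,d}) \<le> 3"
  proof (cases "a \<noteq> c \<and> a \<noteq> d \<and> b \<noteq> c \<and> b \<noteq> d")
    case True
    hence "\<tau> a = b" "\<tau> b = a" using t h(1) by auto
    hence "f a = f b" unfolding f_def by (simp add: transpose_commute)
    hence "f ` {a,b,c,d} = f ` {a,c,d}" by auto
    moreover have "card (f ` {a,c,d}) \<le> 3" using card_image_le[of "{a,c,d}" f] card3[of a c d] by simp
    ultimately show ?thesis by simp
  next
    case False
    hence "{a,b,c,d} = {a,c,d} \<or> {a,b,c,d} = {b,c,d}" by auto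
    hence "card {a,b,c,d} \<le> 3" using card3 by metis
    thus ?thesis using card_image_le[of "{a,b,c,d}" f] by simp
  qed
  have "card {s1,s2,s3,s4} \<le> card (f ` {a,b,c,d})" by (rule card_mono[OF _ sub]) simp
  thus False using c4 le by simp
qed

lemma verts_inv: "p \<in> CT_verts n \<Longrightarrow> inv p \<circ> p = id \<and> p \<circ> inv p = id"
  unfolding CT_verts_def using permutes_inv_o by blast

lemma adj_ok: assumes "CT_adj n p w" "CT_adj n q w" shows "ok (p \<circ> inv q) (w \<circ> inv p)"
proof -
  obtain a b where ab: "a \<noteq> b" "w \<circ> inv p = transpose a b" and vp: "p \<in> CT_verts n"
    using assms(1) unfolding CT_adj_def by blast
  obtain c d where cd: "c \<noteq> d" "w \<circ> inv q = transpose c d"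
    using assms(2) unfolding CT_adj_def by blast
  have "(w \<circ> inv p) \<circ> (p \<circ> inv q) = w \<circ> (inv p \<circ> p) \<circ> inv q" by (simp add: comp_assoc)
  also have "\<dots> = w \<circ> inv q" using verts_inv[OF vp] by simp
  finally show ?thesis unfolding ok_def using ab cd by metis
qed

lemma w_rec: assumes "CT_adj n p w" shows "w = (w \<circ> inv p) \<circ> p"
proof -
  have vp: "p \<in> CT_verts n" using assms unfolding CT_adj_def by blast
  have "(w \<circ> inv p) \<circ> p = w \<circ> (inv p \<circ> p)" by (simp add: comp_assoc)
  thus ?thesis using verts_inv[OF vp] by simp
qed

lemma no4common:
  assumes "p \<noteq> q" "CT_adj n p w1" "CT_adj n q w1" "CT_adj n p w2" "CT_adj n q w2"
    "CT_adj n p w3" "CT_adj n q w3" "CT_adj n p w4" "CT_adj n q w4" "distinct [w1,w2,w3,w4]"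
  shows False
proof -
  have vp: "p \<in> CT_verts n" "q \<in> CT_verts n" using assms(2,3) unfolding CT_adj_def by blast+
  have tau: "p \<circ> inv q \<noteq> id"
  proof
    assume "p \<circ> inv q = id"
    hence "(p \<circ> inv q) \<circ> q = q" by simp
    moreover have "(p \<circ> inv q) \<circ> q = p \<circ> (inv q \<circ> q)" by (simp add: comp_assoc)
    ultimately show False using verts_inv[OF vp(2)] assms(1) by simp
  qed
  have d: "distinct [w1 \<circ> inv p, w2 \<circ> inv p, w3 \<circ> inv p, w4 \<circ> inv p]"
    using assms(10) w_rec[OF assms(2)] w_rec[OF assms(4)] w_rec[OF assms(6)] w_rec[OF assms(8)]
    by (simp, metis)
  show False
    by (rule at_most_3[OF tau adj_ok[OF assms(2,3)] adj_ok[OF assms(4,5)]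
          adj_ok[OF assms(6,7)] adj_ok[OF assms(8,9)] d])
qed



lemma len4: "length vs = 4 \<Longrightarrow> vs = [vs!0, vs!1, vs!2, vs!3]"
proof -
  assume "length vs = 4"
  then obtain a t1 where "vs = a # t1" "length t1 = 3" by (cases vs) auto
  moreover then obtain b t2 where "t1 = b # t2" "length t2 = 2" by (cases t1) auto
  moreover then obtain c t3 where "t2 = c # t3" "length t3 = 1" by (cases t2) auto
  moreover then obtain d where "t3 = [d]" by (cases t3) auto
  ultimately show ?thesis by simp
qed

lemma cyc4: assumes "H \<in> cycles_of_length E 4"
  shows "\<exists>a b c d. distinct [a,b,c,d] \<and> H = {{a,b},{b,c},{c,d},{d,a}}"
proof -
  obtain vs where vs: "H = (\<lambda>i. {vs ! i, vs ! ((i + 1) mod 4)}) ` {..<4}" "length vs = 4" "distinct vs"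
    using assms unfolding cycles_of_length_def by blast
  define a b c d where "a = vs!0" "b = vs!1" "c = vs!2" "d = vs!3"
  have e: "vs = [a,b,c,d]" using len4[OF vs(2)] unfolding a_b_c_d_def .
  have u: "{..<4::nat} = {0,1,2,3}" by auto
  have "H = {{a,b},{b,c},{c,d},{d,a}}" unfolding vs(1) u by (simp add: e)
  thus ?thesis using vs(3) e by metis
qed

lemma path_of: assumes "distinct [a,b,c,d]" "H = {{a,b},{b,c},{c,d},{d,a}}" "{x,y} \<in> H"
  shows "\<exists>u v. distinct [x,u,v,y] \<and> H = {{x,y},{x,u},{u,v},{v,y}}"
proof -
  have "(x = a \<and> y = b) \<or> (x = b \<and> y = a) \<or> (x = b \<and> y = c) \<or> (x = c \<and> y = b) \<or>
        (x = c \<and> y = d) \<or> (x = d \<and> y = c) \<or> (x = d \<and> y = a) \<or> (x = a \<and> y = d)"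
    using assms(2,3) by (auto simp: doubleton_eq_iff)
  thus ?thesis
  proof (elim disjE conjE)
    assume "x = a" "y = b" thus ?thesis using assms(1) unfolding assms(2) by - (rule exI[of _ d], rule exI[of _ c], simp add: insert_commute, blast)
  next
    assume "x = b" "y = a" thus ?thesis using assms(1) unfolding assms(2) by - (rule exI[of _ c], rule exI[of _ d], simp add: insert_commute, blast)
  next
    assume "x = b" "y = c" thus ?thesis using assms(1) unfolding assms(2) by - (rule exI[of _ a], rule exI[of _ d], simp add: insert_commute, blast)
  next
    assume "x = c" "y = b" thus ?thesis using assms(1) unfolding assms(2) by - (rule exI[of _ d], rule exI[of _ a], simp add: insert_commute, blast)
  next
    assume "x = c" "y = d" thus ?thesis using assms(1) unfolding assms(2) by - (rule exI[of _ b], rule exI[of _ a], simp add: insert_commute, blast)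
  next
    assume "x = d" "y = c" thus ?thesis using assms(1) unfolding assms(2) by - (rule exI[of _ a], rule exI[of _ b], simp add: insert_commute, blast)
  next
    assume "x = d" "y = a" thus ?thesis using assms(1) unfolding assms(2) by - (rule exI[of _ c], rule exI[of _ b], simp add: insert_commute, blast)
  next
    assume "x = a" "y = d" thus ?thesis using assms(1) unfolding assms(2) by - (rule exI[of _ b], rule exI[of _ c], auto simp: insert_commute)
  qed
qed

lemma six: assumes "distinct [x,u,v,y,v',u']" "{x,u} \<in> G" "{u,v} \<in> G" "{v,y} \<in> G"
   "{y,v'} \<in> G" "{v',u'} \<in> G" "{u',x} \<in> G"
  shows "cycles_of_length G 6 \<noteq> {}"
proof -
  let ?vs = "[x,u,v,y,v',u']"
  have all: "\<forall>i<6. {?vs ! i, ?vs ! ((i + 1) mod 6)} \<in> G"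
  proof (intro allI impI)
    fix i :: nat assume "i < 6"
    hence "i = 0 \<or> i = 1 \<or> i = 2 \<or> i = 3 \<or> i = 4 \<or> i = 5" by auto
    thus "{?vs ! i, ?vs ! ((i + 1) mod 6)} \<in> G" using assms by auto
  qed
  have "(\<lambda>i. {?vs ! i, ?vs ! ((i + 1) mod 6)}) ` {..<6} \<in> cycles_of_length G 6"
    unfolding cycles_of_length_def
    apply (rule CollectI, rule exI[of _ ?vs])
    apply (intro conjI)
       apply (rule refl)
      apply simp
     apply (rule assms(1))
    apply (rule all)
    done
  thus ?thesis by blast
qed


lemma three_elems: assumes "2 < card S"
  obtains a b c where "a \<in> S" "b \<in> S" "c \<in> S" "distinct [a,b,c]"
proof -
  have f: "finite S" using assms card.infinite by fastforce
  have "S \<noteq> {}" using assms by (intro notI) simp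
  then obtain a where a: "a \<in> S" by blast
  have "1 < card (S - {a})" using assms a f by (simp add: card_Diff_singleton)
  hence "S - {a} \<noteq> {}" by (intro notI) simp
  then obtain b where b: "b \<in> S - {a}" by blast
  have "0 < card (S - {a} - {b})" using \<open>1 < card (S - {a})\<close> b f by (simp add: card_Diff_singleton)
  hence "S - {a} - {b} \<noteq> {}" by (intro notI) simp
  then obtain c where c: "c \<in> S - {a} - {b}" by blast
  show ?thesis using that a b c by auto
qed

definition Qp :: "nat \<Rightarrow> (nat \<Rightarrow> nat) set set \<Rightarrow> (nat \<Rightarrow> nat) \<Rightarrow> (nat \<Rightarrow> nat) \<Rightarrow> (nat \<Rightarrow> nat) \<Rightarrow> (nat \<Rightarrow> nat) \<Rightarrow> bool" where
  "Qp n G x y u v \<longleftrightarrow> distinct [x,u,v,y] \<and> {x,u} \<in> G \<and> {u,v} \<in> G \<and> {v,y} \<in> G"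

lemma get_path:
  assumes "H \<in> cycles_of_length (CT_edges n) 4" "{x,y} \<in> H" "H - {{x,y}} \<subseteq> G"
  shows "\<exists>u v. Qp n G x y u v \<and> H = {{x,y},{x,u},{u,v},{v,y}}"
proof -
  obtain a b c d where abcd: "distinct [a,b,c,d]" "H = {{a,b},{b,c},{c,d},{d,a}}"
    using cyc4[OF assms(1)] by blast
  obtain u v where uv: "distinct [x,u,v,y]" "H = {{x,y},{x,u},{u,v},{v,y}}"
    using path_of[OF abcd assms(2)] by blast
  have ne: "{x,u} \<noteq> {x,y}" "{u,v} \<noteq> {x,y}" "{v,y} \<noteq> {x,y}"
    using uv(1) by (auto simp: doubleton_eq_iff)
  have "{x,u} \<in> G" "{u,v} \<in> G" "{v,y} \<in> G" using assms(3) uv(2) ne by blast+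
  thus ?thesis unfolding Qp_def using uv by blast
qed

lemma share:
  assumes G: "G \<subseteq> CT_edges n" and no6: "cycles_of_length G 6 = {}" and xy: "CT_adj n x y"
    and q1: "Qp n G x y u v" and q2: "Qp n G x y u' v'"
  shows "u = u' \<or> v = v'"
proof (rule ccontr)
  assume nn: "\<not> (u = u' \<or> v = v')"
  have d1: "distinct [x,u,v,y]" and e1: "{x,u} \<in> G" "{u,v} \<in> G" "{v,y} \<in> G" using q1 unfolding Qp_def by auto
  have d2: "distinct [x,u',v',y]" and e2: "{x,u'} \<in> G" "{u',v'} \<in> G" "{v',y} \<in> G" using q2 unfolding Qp_def by auto
  have a1: "CT_adj n x u" "CT_adj n v y" "CT_adj n x u'" "CT_adj n v' y"
    using edge_adj G e1 e2 by blast+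
  have "u \<noteq> v'"
  proof
    assume "u = v'"
    thus False using no_triangle[OF xy a1(1)] adj_sym[OF a1(4)] by simp
  qed
  moreover have "v \<noteq> u'"
  proof
    assume "v = u'"
    thus False using no_triangle[OF xy a1(3)] adj_sym[OF a1(2)] by simp
  qed
  ultimately have d: "distinct [x,u,v,y,v',u']" using d1 d2 nn by auto
  have "{y,v'} \<in> G" "{v',u'} \<in> G" "{u',x} \<in> G" using e2 by (simp_all add: insert_commute)
  hence "cycles_of_length G 6 \<noteq> {}" using six[OF d e1] by blast
  thus False using no6 by simp
qed

theorem mainTheorem13:
  fixes n :: nat and G :: "(nat \<Rightarrow> nat) set set"
  assumes "n \<ge> 3"
    and "G \<subseteq> CT_edges n"
    and "cycles_of_length G 6 = {}"
  shows "\<forall>e\<in>CT_edges n.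
           card {H \<in> cycles_of_length (CT_edges n) 4. e \<in> H \<and> H - {e} \<subseteq> G} \<le> 2"
proof
  fix e assume "e \<in> CT_edges n"
  then obtain x y where e: "e = {x,y}" and xy: "CT_adj n x y" unfolding CT_edges_def by blast
  let ?S = "{H \<in> cycles_of_length (CT_edges n) 4. e \<in> H \<and> H - {e} \<subseteq> G}"
  show "card ?S \<le> 2"
  proof (rule ccontr)
    assume "\<not> card ?S \<le> 2"
    hence "2 < card ?S" by simp
    then obtain H1 H2 H3 where H: "H1 \<in> ?S" "H2 \<in> ?S" "H3 \<in> ?S" "distinct [H1,H2,H3]"
      by (rule three_elems)
    obtain u1 v1 where 1: "Qp n G x y u1 v1" "H1 = {{x,y},{x,u1},{u1,v1},{v1,y}}"
      using get_path[of H1 n x y G] H(1) e by blast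
    obtain u2 v2 where 2: "Qp n G x y u2 v2" "H2 = {{x,y},{x,u2},{u2,v2},{v2,y}}"
      using get_path[of H2 n x y G] H(2) e by blast
    obtain u3 v3 where 3: "Qp n G x y u3 v3" "H3 = {{x,y},{x,u3},{u3,v3},{v3,y}}"
      using get_path[of H3 n x y G] H(3) e by blast
    have p12: "\<not> (u1 = u2 \<and> v1 = v2)"
    proof
      assume "u1 = u2 \<and> v1 = v2"
      hence "H1 = H2" using 1(2) 2(2) by simp
      thus False using H(4) by simp
    qed
    have p13: "\<not> (u1 = u3 \<and> v1 = v3)"
    proof
      assume "u1 = u3 \<and> v1 = v3"
      hence "H1 = H3" using 1(2) 3(2) by simp
      thus False using H(4) by simp
    qed
    have p23: "\<not> (u2 = u3 \<and> v2 = v3)"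
    proof
      assume "u2 = u3 \<and> v2 = v3"
      hence "H2 = H3" using 2(2) 3(2) by simp
      thus False using H(4) by simp
    qed
    have s12: "u1 = u2 \<or> v1 = v2" by (rule share[OF assms(2,3) xy 1(1) 2(1)])
    have s13: "u1 = u3 \<or> v1 = v3" by (rule share[OF assms(2,3) xy 1(1) 3(1)])
    have s23: "u2 = u3 \<or> v2 = v3" by (rule share[OF assms(2,3) xy 2(1) 3(1)])
    have cases: "(u1 = u2 \<and> u2 = u3 \<and> distinct [v1,v2,v3]) \<or> (v1 = v2 \<and> v2 = v3 \<and> distinct [u1,u2,u3])"
      using p12 p13 p23 s12 s13 s23 by auto
    have A: "\<And>u v. Qp n G x y u v \<Longrightarrow> CT_adj n x u \<and> CT_adj n u v \<and> CT_adj n v y \<and> distinct [x,u,v,y]"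
      using edge_adj assms(2) unfolding Qp_def by blast
    have a1: "CT_adj n x u1" "CT_adj n u1 v1" "CT_adj n v1 y" "distinct [x,u1,v1,y]" using A[OF 1(1)] by simp_all
    have a2: "CT_adj n x u2" "CT_adj n u2 v2" "CT_adj n v2 y" "distinct [x,u2,v2,y]" using A[OF 2(1)] by simp_all
    have a3: "CT_adj n x u3" "CT_adj n u3 v3" "CT_adj n v3 y" "distinct [x,u3,v3,y]" using A[OF 3(1)] by simp_all
    have yx: "CT_adj n y x" by (rule adj_sym[OF xy])
    from cases show False
    proof
      assume c: "u1 = u2 \<and> u2 = u3 \<and> distinct [v1,v2,v3]"
      hence u: "u2 = u1" "u3 = u1" by simp_all
      have ne: "u1 \<noteq> y" using a1(4) by simp
      have dd: "distinct [x,v1,v2,v3]" using c a1(4) a2(4) a3(4) by auto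
      show False
        by (rule no4common[OF ne adj_sym[OF a1(1)] yx a1(2) adj_sym[OF a1(3)]
              a2(2)[unfolded u] adj_sym[OF a2(3)] a3(2)[unfolded u] adj_sym[OF a3(3)] dd])
    next
      assume c: "v1 = v2 \<and> v2 = v3 \<and> distinct [u1,u2,u3]"
      hence v: "v2 = v1" "v3 = v1" by simp_all
      have ne: "x \<noteq> v1" using a1(4) by simp
      have dd: "distinct [y,u1,u2,u3]" using c a1(4) a2(4) a3(4) by auto
      show False
        by (rule no4common[OF ne xy a1(3) a1(1) adj_sym[OF a1(2)]
              a2(1) adj_sym[OF a2(2)[unfolded v]] a3(1) adj_sym[OF a3(2)[unfolded v]] dd])
    qed
qed
qed

end
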